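(* Let $d\geq2$, let $\omega\in\mathbb{R}^d$ be non-resonant (i.e. $\langle\omega,k\rangle\neq0$ for all $k\in\mathbb{Z}^d\setminus\{0\}$), and let $(k_n)$ be a sequence in $\mathbb{Z}^d$ with $|k_n|\to\infty$ and $|\langle\omega,k_n\rangle|<C/|k_n|^{d-1}$ for a constant $C$ independent of $n$. Then (for $n$ large enough) there exists an integer vector $k_n'\in\mathbb{Z}^d$ such that $$\langle k_n,k_n'\rangle=0,\qquad |k_n'|\sim|k_n|,\qquad |\langle k_n',\omega\rangle|\sim|k_n|.$$
   Context: $|\cdot|$ is the Euclidean norm. The notation $f\sim g$ means $\frac1{C'}g<f<C'g$ for some constant $C'>1$ independent of $n$. *)

theory Defs
  imports "HOL-Analysis.Analysis"
begin

definition ivec :: "int ^ 'd \<Rightarrow> real ^ 'd" where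
  "ivec k = (\<chi> i. real_of_int (k $ i))"

definition non_resonant :: "real ^ 'd \<Rightarrow> bool" where
  "non_resonant \<omega> \<longleftrightarrow> (\<forall>k::int ^ 'd. k \<noteq> 0 \<longrightarrow> \<omega> \<bullet> ivec k \<noteq> 0)"

end

theory Submission
  imports Defs
begin

lemma ex_max_idx:
  fixes f :: "'d::finite \<Rightarrow> real"
  obtains i where "\<And>l. f l \<le> f i"
proof -
  have mi: "Max (range f) \<in> range f" by (rule Max_in) auto
  obtain i where "f i = Max (range f)" using mi by (metis rangeE)
  moreover have "\<And>l. f l \<le> Max (range f)" by (rule Max_ge) auto
  ultimately show ?thesis using that[of i] by simp
qed

lemma norm_le_l1c: "norm (x::real^'d) \<le> (\<Sum>l\<in>UNIV. \<bar>x$l\<bar>)"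
  unfolding norm_vec_def using L2_set_le_sum[of UNIV "\<lambda>i. norm (x$i)"] by simp

lemma ivec_diff: "ivec (a - b) = ivec a - ivec b"
  by (simp add: ivec_def vec_eq_iff)
lemma ivec_axis: "ivec (axis i c) = axis i (real_of_int c)"
  by (simp add: ivec_def vec_eq_iff axis_def)
lemma ivec_nth: "ivec k $ i = real_of_int (k $ i)"
  by (simp add: ivec_def)

lemma norm_axis_real: "norm (axis i (c::real) :: real^'d) = \<bar>c\<bar>"
proof -
  have "axis i c = c *\<^sub>R (axis i 1 :: real^'d)" by (simp add: vec_eq_iff axis_def)
  thus ?thesis by (simp add: norm_axis_1)
qed

lemma inner_sum_cart: "(x::real^'d) \<bullet> y = (\<Sum>l\<in>UNIV. x$l * y$l)"
  by (simp add: inner_vec_def)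

lemma key:
  fixes \<omega> :: "real ^ 'd" and k :: "int ^ 'd" and C :: real
  defines "D \<equiv> real CARD('d)"
  assumes w: "\<omega> \<noteq> 0" and pos: "norm (ivec k) > 0"
    and big: "norm (ivec k) * norm \<omega> \<ge> 2 * D * \<bar>C\<bar>"
    and sm: "\<bar>\<omega> \<bullet> ivec k\<bar> \<le> \<bar>C\<bar>"
  shows "\<exists>k'::int ^ 'd.
           ivec k \<bullet> ivec k' = 0 \<and>
           norm (ivec k) / D \<le> norm (ivec k') \<and> norm (ivec k') \<le> 2 * norm (ivec k) \<and>
           norm (ivec k) * norm \<omega> / (2*D^2) \<le> \<bar>ivec k' \<bullet> \<omega>\<bar> \<and> \<bar>ivec k' \<bullet> \<omega>\<bar> \<le> 2 * norm (ivec k) * norm \<omega>"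
proof -
  define x where "x = ivec k"
  have D1: "D \<ge> 1" unfolding D_def by simp
  obtain i where imax: "\<And>l. \<bar>x$l\<bar> \<le> \<bar>x$i\<bar>" using ex_max_idx[of "\<lambda>l. \<bar>x$l\<bar>"] by blast
  have "norm x \<le> (\<Sum>l\<in>UNIV. \<bar>x$l\<bar>)" by (rule norm_le_l1c)
  also have "\<dots> \<le> (\<Sum>l\<in>(UNIV::'d set). \<bar>x$i\<bar>)" by (rule sum_mono) (rule imax)
  also have "\<dots> = D * \<bar>x$i\<bar>" by (simp add: D_def)
  finally have xi: "norm x / D \<le> \<bar>x$i\<bar>" using D1 by (simp add: field_simps)
  define v where "v j = x$j * \<omega>$i - x$i * \<omega>$j" for j
  obtain j where jmax: "\<And>l. \<bar>v l\<bar> \<le> \<bar>v j\<bar>" using ex_max_idx[of "\<lambda>l. \<bar>v l\<bar>"] by blast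
  have ident: "(\<Sum>l\<in>UNIV. \<omega>$l * v l) = \<omega>$i * (x \<bullet> \<omega>) - x$i * (\<omega> \<bullet> \<omega>)"
    by (simp add: v_def inner_sum_cart algebra_simps sum_subtractf sum_distrib_left)
  have P1: "\<bar>x$i\<bar> * (norm \<omega> * norm \<omega>) = \<bar>x$i * (\<omega> \<bullet> \<omega>)\<bar>"
    by (simp add: abs_mult power2_eq_square[symmetric] power2_norm_eq_inner)
  have P2: "\<bar>x$i * (\<omega> \<bullet> \<omega>)\<bar> \<le> \<bar>\<omega>$i * (x \<bullet> \<omega>)\<bar> + \<bar>\<Sum>l\<in>UNIV. \<omega>$l * v l\<bar>"
    using ident by linarith
  have P3: "\<bar>\<omega>$i * (x \<bullet> \<omega>)\<bar> \<le> norm \<omega> * \<bar>C\<bar>"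
    using sm component_le_norm_cart[of \<omega> i] unfolding abs_mult x_def
    by (simp add: inner_commute mult_mono)
  have "\<bar>\<Sum>l\<in>UNIV. \<omega>$l * v l\<bar> \<le> (\<Sum>l\<in>(UNIV::'d set). norm \<omega> * \<bar>v j\<bar>)"
  proof (rule order_trans[OF sum_abs], rule sum_mono)
    fix l :: 'd
    show "\<bar>\<omega>$l * v l\<bar> \<le> norm \<omega> * \<bar>v j\<bar>"
      unfolding abs_mult by (rule mult_mono) (auto intro: component_le_norm_cart jmax)
  qed
  also have "\<dots> = D * norm \<omega> * \<bar>v j\<bar>" by (simp add: D_def)
  finally have A: "\<bar>x$i\<bar> * (norm \<omega> * norm \<omega>) \<le> norm \<omega> * \<bar>C\<bar> + D * norm \<omega> * \<bar>v j\<bar>"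
    using P1 P2 P3 by linarith
  have nw: "norm \<omega> > 0" using w by simp
  have "norm \<omega> * (\<bar>x$i\<bar> * norm \<omega>) \<le> norm \<omega> * (\<bar>C\<bar> + D * \<bar>v j\<bar>)"
    using A by (simp add: algebra_simps)
  hence A2: "\<bar>x$i\<bar> * norm \<omega> \<le> \<bar>C\<bar> + D * \<bar>v j\<bar>"
    using nw by (simp add: mult_le_cancel_left_pos)
  have "norm x / D * norm \<omega> \<le> \<bar>x$i\<bar> * norm \<omega>" using xi nw by (intro mult_right_mono) auto
  with A2 have B: "norm x * norm \<omega> / D \<le> \<bar>C\<bar> + D * \<bar>v j\<bar>" by (simp add: mult.commute)
  have "norm x * norm \<omega> / (2*D^2) \<le> \<bar>v j\<bar>"
  proof -
    have "\<bar>C\<bar> \<le> norm x * norm \<omega> / (2*D)" using big D1 unfolding x_def by (simp add: field_simps)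
    with B have "norm x * norm \<omega> / (2*D) \<le> D * \<bar>v j\<bar>" by (simp add: field_simps)
    thus ?thesis using D1 by (simp add: field_simps power2_eq_square)
  qed
  note vj = this
  have "norm x * norm \<omega> / (2*D^2) > 0" using pos nw D1 unfolding x_def by simp
  hence "v j \<noteq> 0" using vj by linarith
  hence ji: "j \<noteq> i" by (auto simp: v_def)
  define k' where "k' = axis i (k$j) - axis j (k$i)"
  have xk': "ivec k' = axis i (x$j) - axis j (x$i)"
    by (simp add: k'_def x_def ivec_diff ivec_axis ivec_nth)
  have o1: "x \<bullet> ivec k' = 0" by (simp add: xk' inner_diff_right inner_axis)
  have o2: "ivec k' \<bullet> \<omega> = v j" by (simp add: xk' inner_diff_left inner_commute[of "axis _ _"] inner_axis v_def)
  have n1: "\<bar>x$i\<bar> \<le> norm (ivec k')"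
    using component_le_norm_cart[of "ivec k'" j] ji by (simp add: xk' axis_def)
  have n2: "norm (ivec k') \<le> 2 * norm x"
  proof -
    have "norm (ivec k') \<le> norm (axis i (x$j)) + norm (axis j (x$i))" unfolding xk' by (rule norm_triangle_ineq4)
    also have "\<dots> = \<bar>x$j\<bar> + \<bar>x$i\<bar>" by (simp add: norm_axis_real)
    also have "\<dots> \<le> 2 * norm x" using component_le_norm_cart[of x i] component_le_norm_cart[of x j] by simp
    finally show ?thesis .
  qed
  have n3: "\<bar>ivec k' \<bullet> \<omega>\<bar> \<le> 2 * norm x * norm \<omega>"
  proof -
    have "\<bar>ivec k' \<bullet> \<omega>\<bar> \<le> norm (ivec k') * norm \<omega>" by (rule Cauchy_Schwarz_ineq2)
    also have "\<dots> \<le> 2 * norm x * norm \<omega>" using n2 by (intro mult_right_mono) auto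
    finally show ?thesis .
  qed
  show ?thesis
    apply (rule exI[of _ k'])
    using o1 o2 n1 n2 n3 xi vj unfolding x_def by auto
qed

theorem lemma3p1:
  fixes \<omega> :: "real ^ 'd" and k :: "nat \<Rightarrow> int ^ 'd" and C :: real
  assumes dim: "CARD('d) \<ge> 2"
    and nr: "non_resonant \<omega>"
    and lim: "filterlim (\<lambda>n. norm (ivec (k n))) at_top sequentially"
    and small: "\<forall>\<^sub>F n in sequentially.
                  \<bar>\<omega> \<bullet> ivec (k n)\<bar> < C / norm (ivec (k n)) ^ (CARD('d) - 1)"
  shows "\<exists>C'>1. \<exists>N. \<forall>n\<ge>N. \<exists>k'::int ^ 'd.
           ivec (k n) \<bullet> ivec k' = 0 \<and>
           norm (ivec (k n)) / C' < norm (ivec k') \<and> norm (ivec k') < C' * norm (ivec (k n)) \<and>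
           norm (ivec (k n)) / C' < \<bar>ivec k' \<bullet> \<omega>\<bar> \<and> \<bar>ivec k' \<bullet> \<omega>\<bar> < C' * norm (ivec (k n))"
proof -
  define D where "D = real CARD('d)"
  have D1: "D \<ge> 1" unfolding D_def by simp
  have w: "\<omega> \<noteq> 0"
  proof
    assume "\<omega> = 0"
    moreover have "axis undefined (1::int) \<noteq> (0::int^'d)" by (simp add: axis_eq_0_iff)
    ultimately show False using nr[unfolded non_resonant_def, rule_format, of "axis undefined 1"] by simp
  qed
  hence nw: "norm \<omega> > 0" by simp
  define C' where "C' = 2*D^2/norm \<omega> + 2*norm \<omega> + D + 3"
  have C'1: "C' > 1" "C' > D" "C' > 2" "C' > 2*norm \<omega>" "C' > 2*D^2/norm \<omega>"
    unfolding C'_def using nw D1 by (auto intro: add_pos_nonneg)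
  have ev1: "\<forall>\<^sub>F n in sequentially. max 1 (2*D*\<bar>C\<bar>/norm \<omega>) + 1 \<le> norm (ivec (k n))"
    using lim unfolding filterlim_at_top by blast
  have "\<forall>\<^sub>F n in sequentially. \<exists>k'::int ^ 'd.
           ivec (k n) \<bullet> ivec k' = 0 \<and>
           norm (ivec (k n)) / C' < norm (ivec k') \<and> norm (ivec k') < C' * norm (ivec (k n)) \<and>
           norm (ivec (k n)) / C' < \<bar>ivec k' \<bullet> \<omega>\<bar> \<and> \<bar>ivec k' \<bullet> \<omega>\<bar> < C' * norm (ivec (k n))"
    using ev1 small
  proof eventually_elim
    case (elim n)
    define y where "y = norm (ivec (k n))"
    have y1: "y \<ge> 1" "y > 0" using elim(1) unfolding y_def by auto
    have bigy: "y * norm \<omega> \<ge> 2 * D * \<bar>C\<bar>"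
    proof -
      have "2*D*\<bar>C\<bar>/norm \<omega> \<le> y" using elim(1) unfolding y_def by linarith
      thus ?thesis using nw by (simp add: field_simps)
    qed
    have "C / y ^ (CARD('d) - 1) \<le> \<bar>C\<bar>"
    proof -
      have "y ^ (CARD('d) - 1) \<ge> 1" using y1 by simp
      show ?thesis
      proof (cases "C \<ge> 0")
        case True
        have "C / y ^ (CARD('d) - 1) \<le> C / 1"
          using True \<open>y ^ (CARD('d) - 1) \<ge> 1\<close> by (intro divide_left_mono) auto
        thus ?thesis by simp
      next
        case False
        hence "C / y ^ (CARD('d) - 1) \<le> 0" using y1 by (intro divide_nonpos_pos) auto
        thus ?thesis by simp
      qed
    qed
    hence sm: "\<bar>\<omega> \<bullet> ivec (k n)\<bar> \<le> \<bar>C\<bar>" using elim(2) unfolding y_def by linarith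
    obtain k' where K: "ivec (k n) \<bullet> ivec k' = 0"
           "y / D \<le> norm (ivec k')" "norm (ivec k') \<le> 2 * y"
           "y * norm \<omega> / (2*D^2) \<le> \<bar>ivec k' \<bullet> \<omega>\<bar>" "\<bar>ivec k' \<bullet> \<omega>\<bar> \<le> 2 * y * norm \<omega>"
      using key[OF w, of "k n" C] y1 bigy sm unfolding y_def D_def by auto
    have s1: "y / C' < y / D" using y1 D1 C'1 by (simp add: divide_strict_left_mono)
    have s2: "2 * y < C' * y" using y1 C'1 by simp
    have s3: "y / C' < y * norm \<omega> / (2*D^2)"
    proof -
      have c0: "C' > 0" using C'1 by simp
      have "2*D^2 < C' * norm \<omega>" using C'1(5) nw by (simp add: pos_divide_less_eq)
      then have "1 / C' < norm \<omega> / (2*D^2)" using c0 D1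
        by (simp add: field_simps)
      hence "y * (1 / C') < y * (norm \<omega> / (2*D^2))" using y1 by (intro mult_strict_left_mono) auto
      thus ?thesis by simp
    qed
    have s4: "2 * y * norm \<omega> < C' * y" using y1 C'1(4) by simp
    show ?case apply (rule exI[of _ k'])
      using K s1 s2 s3 s4 unfolding y_def by linarith
  qed
  then obtain N where "\<forall>n\<ge>N. \<exists>k'::int ^ 'd.
           ivec (k n) \<bullet> ivec k' = 0 \<and>
           norm (ivec (k n)) / C' < norm (ivec k') \<and> norm (ivec k') < C' * norm (ivec (k n)) \<and>
           norm (ivec (k n)) / C' < \<bar>ivec k' \<bullet> \<omega>\<bar> \<and> \<bar>ivec k' \<bullet> \<omega>\<bar> < C' * norm (ivec (k n))"
    unfolding eventually_sequentially by blast
  thus ?thesis using C'1(1) by blast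
qed

end
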